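(* Let $n\ge 3$, $k\ge 3$, and let $\alpha=a_1a_2\cdots a_n\in\mathbf{A}_k(n)$. Let $j$ be the index of the last symbol of $\alpha$ different from $k-1$, and $\ell$ the index of the second-last symbol of $\alpha$ different from $k-1$. If (i) $a_n<k-1$, or (ii) $a_j<k-2$, or (iii) $a_1\cdots a_\ell$ is not a palindrome, then $\mathrm{LastNonMax}(\alpha)\in\mathbf{A}_k(n)$. Otherwise (i.e., $a_n=k-1$, $a_j=k-2$, and $a_1\cdots a_\ell$ is a palindrome), $\mathrm{LastNonMax}(\alpha)$ is a symmetric bracelet.
   Context: Let $\Sigma=\{0,1,\dots,k-1\}$. Strings are compared lexicographically ($\alpha<\beta$ if $\alpha$ is a proper prefix of $\beta$, or $\alpha$ has the smaller symbol at the first index where they differ). For $\alpha=a_1\cdots a_n$, $\alpha^R=a_n\cdots a_1$; $\alpha$ is a palindrome if $\alpha=\alpha^R$. $[\alpha]$ is the set of rotations of $\alpha$. $\alpha$ is a necklace if it is the lexicographically smallest element of $[\alpha]$; a bracelet if it is the lexicographically smallest element of $[\alpha]\cup[\alpha^R]$. A necklace $\alpha$ is symmetric if $\alpha^R\in[\alpha]$, asymmetric otherwise. $\mathbf{A}_k(n)$ is the set of asymmetric bracelets of length $n$ over $\Sigma$. For $\alpha\neq(k-1)^n$ with $j$ the index of its last symbol different from $k-1$, $\mathrm{LastNonMax}(\alpha)=a_1\cdots a_{j-1}(a_j+1)(k-1)^{n-j}$. *)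

theory Defs
  imports Main
begin

(* Strings over {0,...,k-1} are lists of naturals; positions are 1-based in the
   paper, so a_i = w ! (i - 1). *)

definition lex_less :: "nat list \<Rightarrow> nat list \<Rightarrow> bool" where
  "lex_less a b \<longleftrightarrow> (a, b) \<in> lexord {(x, y). x < y}"

definition lex_le :: "nat list \<Rightarrow> nat list \<Rightarrow> bool" where
  "lex_le a b \<longleftrightarrow> a = b \<or> lex_less a b"

definition rotations :: "nat list \<Rightarrow> nat list set" where
  "rotations w = {rotate i w | i. i < length w}"

definition is_palindrome :: "nat list \<Rightarrow> bool" where
  "is_palindrome w \<longleftrightarrow> w = rev w"

definition is_necklace :: "nat list \<Rightarrow> bool" where
  "is_necklace w \<longleftrightarrow> (\<forall>v \<in> rotations w. lex_le w v)"

definition is_bracelet :: "nat list \<Rightarrow> bool" where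
  "is_bracelet w \<longleftrightarrow> (\<forall>v \<in> rotations w \<union> rotations (rev w). lex_le w v)"

definition symmetric_necklace :: "nat list \<Rightarrow> bool" where
  "symmetric_necklace w \<longleftrightarrow> is_necklace w \<and> rev w \<in> rotations w"

definition asymmetric_necklace :: "nat list \<Rightarrow> bool" where
  "asymmetric_necklace w \<longleftrightarrow> is_necklace w \<and> rev w \<notin> rotations w"

definition asym_bracelets :: "nat \<Rightarrow> nat \<Rightarrow> nat list set" where
  "asym_bracelets k n = {w. length w = n \<and> set w \<subseteq> {0..<k} \<and>
                           is_bracelet w \<and> asymmetric_necklace w}"

definition symmetric_bracelet :: "nat list \<Rightarrow> bool" where
  "symmetric_bracelet w \<longleftrightarrow> is_bracelet w \<and> symmetric_necklace w"

definition last_nonmax_idx :: "nat \<Rightarrow> nat list \<Rightarrow> nat" where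
  "last_nonmax_idx k w = Max {i. 1 \<le> i \<and> i \<le> length w \<and> w ! (i - 1) \<noteq> k - 1}"

definition second_last_nonmax_idx :: "nat \<Rightarrow> nat list \<Rightarrow> nat" where
  "second_last_nonmax_idx k w =
     Max {i. 1 \<le> i \<and> i < last_nonmax_idx k w \<and> w ! (i - 1) \<noteq> k - 1}"

definition LastNonMax :: "nat \<Rightarrow> nat list \<Rightarrow> nat list" where
  "LastNonMax k w = (let j = last_nonmax_idx k w in
     take (j - 1) w @ [w ! (j - 1) + 1] @ replicate (length w - j) (k - 1))"

end

theory Submission
  imports Defs
begin

lemma lex_less_iff:
  assumes "length x = length y"
  shows "lex_less x y \<longleftrightarrow> (\<exists>d<length x. (\<forall>t<d. x!t = y!t) \<and> x!d < y!d)"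
proof -
  have "take i x = take i y \<longleftrightarrow> (\<forall>t<i. x!t = y!t)" if "i < length x" for i
    using that assms by (auto simp: list_eq_iff_nth_eq)
  then show ?thesis
    unfolding lex_less_def lexord_take_index_conv using assms by auto
qed

lemma lex_less_irrefl: "\<not> lex_less x x"
  unfolding lex_less_def by (rule lexord_irreflexive) auto

lemma lex_first:
  "length x = length y \<Longrightarrow> 0 < length x \<Longrightarrow> x!0 < y!0 \<Longrightarrow> lex_less x y"
  by (subst lex_less_iff) auto

lemma lex_le_first:
  assumes "length x = length y" "0 < length x" "lex_le x y"
  shows "x!0 \<le> y!0"
proof (cases "x = y")
  case False
  then have "lex_less x y" using assms(3) lex_le_def by auto
  then obtain d where "d < length x" "\<forall>t<d. x!t = y!t" "x!d < y!d"
    using lex_less_iff[OF assms(1)] by auto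
  then show ?thesis by (cases d) auto
qed simp

lemma perturb:
  assumes len: "length x = length y" and pq: "p \<le> q" "q < length x"
    and le: "lex_le x y" and str: "lex_less x y \<or> p < q"
  shows "lex_less (x[q := x!q + 1]) (y[p := y!p + 1])"
proof -
  have len2: "length (x[q := x!q + 1]) = length (y[p := y!p + 1])" using len by simp
  show ?thesis
  proof (cases "lex_less x y")
    case False
    then have "x = y" "p < q" using le str lex_le_def by auto
    then show ?thesis unfolding lex_less_iff[OF len2]
      using pq by (intro exI[of _ p]) auto
  next
    case True
    then obtain d where d: "d < length x" "\<forall>t<d. x!t = y!t" "x!d < y!d"
      using lex_less_iff[OF len] by auto
    show ?thesis unfolding lex_less_iff[OF len2]
    proof (cases "d < p")
      case True
      then show "\<exists>d<length (x[q := x!q + 1]). (\<forall>t<d. x[q := x!q + 1]!t = y[p := y!p + 1]!t) \<and> x[q := x!q + 1]!d < y[p := y!p + 1]!d"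
        using d pq len by (intro exI[of _ d]) auto
    next
      case False
      show "\<exists>d<length (x[q := x!q + 1]). (\<forall>t<d. x[q := x!q + 1]!t = y[p := y!p + 1]!t) \<and> x[q := x!q + 1]!d < y[p := y!p + 1]!d"
      proof (cases "p < q \<or> d = p")
        case True
        have "x!p \<le> y!p" using d False by (cases "d = p") auto
        then show ?thesis using d pq len False True
          by (intro exI[of _ p]) (auto simp: nth_list_update)
      next
        case False2: False
        then have "p = q" "p < d" using pq False by auto
        then show ?thesis using d pq len
          by (intro exI[of _ d]) (auto simp: nth_list_update)
      qed
    qed
  qed
qed

lemma rot_in: "w \<noteq> [] \<Longrightarrow> rotate i w \<in> rotations w"
  unfolding rotations_def by (subst rotate_conv_mod) auto

lemma rotate_rev_split:
  "i \<le> length w \<Longrightarrow> rotate (length w - i) (rev w) = rev (take i w) @ rev (drop i w)"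
  using rotate_append[of "rev (drop i w)" "rev (take i w)"]
  by (metis length_drop length_rev rev_append append_take_drop_id)

lemma R_nth:
  assumes "i \<le> length w" "t < length w"
  shows "(rev (take i w) @ rev (drop i w)) ! t =
         (if t < i then w!(i-1-t) else w!(length w - 1 - (t - i)))"
  using assms by (auto simp: nth_append rev_nth min_def) (simp add: add.commute)

definition Rw :: "nat \<Rightarrow> nat list \<Rightarrow> nat list" where
  "Rw i w = rev (take i w) @ rev (drop i w)"

lemma Rw_len[simp]: "length (Rw i w) = length w"
  by (simp add: Rw_def)

lemma Rw_nth:
  "i \<le> length w \<Longrightarrow> t < length w \<Longrightarrow>
   Rw i w ! t = (if t < i then w!(i-1-t) else w!(length w - 1 - (t - i)))"
  unfolding Rw_def by (rule R_nth)

lemma Rw_rot: "i \<le> length w \<Longrightarrow> Rw i w = rotate (length w - i) (rev w)"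
  unfolding Rw_def by (simp add: rotate_rev_split)

locale LN =
  fixes k n :: nat and a :: "nat list"
  assumes n3: "n \<ge> 3" and k3: "k \<ge> 3" and aA: "a \<in> asym_bracelets k n"
begin

definition "K = k - 1"
definition "j0 = last_nonmax_idx k a"
definition "J = j0 - 1"
definition "b = a[J := a!J + 1]"

lemma len: "length a = n" using aA by (simp add: asym_bracelets_def)
lemma bound: "t < n \<Longrightarrow> a!t < k"
  using aA len by (auto simp: asym_bracelets_def dest!: nth_mem)
lemma anem: "a \<noteq> []" using len n3 by auto
lemma neck: "r < n \<Longrightarrow> lex_le a (rotate r a)"
  using aA rot_in[OF anem] by (auto simp: asym_bracelets_def asymmetric_necklace_def is_necklace_def)
lemma brac: "1 \<le> i \<Longrightarrow> i \<le> n \<Longrightarrow> lex_le a (Rw i a)"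
proof -
  assume "1 \<le> i" "i \<le> n"
  have "Rw i a \<in> rotations (rev a)"
    using \<open>i \<le> n\<close> rot_in[of "rev a"] anem len by (simp add: Rw_rot)
  then show ?thesis using aA by (auto simp: asym_bracelets_def is_bracelet_def)
qed
lemma asy: "rev a \<notin> rotations a"
  using aA by (auto simp: asym_bracelets_def asymmetric_necklace_def)

lemma Aless: assumes "1 \<le> i" "i \<le> n" shows "lex_less a (Rw i a)"
proof -
  have "Rw i a \<noteq> a"
  proof
    assume eq: "Rw i a = a"
    have "rotate i a = rotate i (rotate (n - i) (rev a))"
      using eq assms len by (simp add: Rw_rot)
    also have "\<dots> = rev a" using assms len by (simp add: rotate_rotate)
    finally show False using asy rot_in[OF anem, of i] by simp
  qed
  then show ?thesis using brac[OF assms] lex_le_def by auto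
qed

lemma K_def2: "K = k - 1" by (simp add: K_def)

lemma Snonempty: "\<exists>t<n. a!t \<noteq> K"
proof (rule ccontr)
  assume "\<not> ?thesis"
  then have "rev a = a" using len
    by (intro nth_equalityI) (auto simp: rev_nth)
  then have "rev a \<in> rotations a" using rot_in[OF anem, of 0] by simp
  then show False using asy by simp
qed

lemma j0_props: "1 \<le> j0" "j0 \<le> n" "a!(j0-1) \<noteq> K"
   "\<And>t. j0 \<le> t \<Longrightarrow> t < n \<Longrightarrow> a!t = K"
proof -
  let ?S = "{i. 1 \<le> i \<and> i \<le> length a \<and> a ! (i - 1) \<noteq> k - 1}"
  have fin: "finite ?S" by (rule finite_subset[of _ "{..length a}"]) auto
  obtain t where t: "t < n" "a!t \<noteq> K" using Snonempty by auto
  have ne: "Suc t \<in> ?S" using t len by (auto simp: K_def)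
  have mem: "j0 \<in> ?S" unfolding j0_def last_nonmax_idx_def
    using Max_in[OF fin] ne by blast
  then show "1 \<le> j0" "j0 \<le> n" "a!(j0-1) \<noteq> K" using len by (auto simp: K_def)
  fix u assume u: "j0 \<le> u" "u < n"
  show "a!u = K"
  proof (rule ccontr)
    assume "a!u \<noteq> K"
    then have "Suc u \<in> ?S" using u len by (auto simp: K_def)
    then have "Suc u \<le> j0" unfolding j0_def last_nonmax_idx_def using Max_ge[OF fin] by blast
    then show False using u by simp
  qed
qed

lemma Jn: "J < n" using j0_props by (simp add: J_def)
lemma aJK: "a!J \<noteq> K" using j0_props by (simp add: J_def)
lemma aK: "J < t \<Longrightarrow> t < n \<Longrightarrow> a!t = K" using j0_props(1,4) by (simp add: J_def)
lemma aJ: "a!J < K" using aJK bound[OF Jn] by (auto simp: K_def)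
lemma j0J: "j0 = Suc J" using j0_props(1) by (simp add: J_def)

lemma a0J: "a!0 \<le> a!J"
proof -
  have "lex_le a (rotate J a)" using neck Jn by simp
  then have "a!0 \<le> rotate J a ! 0" using lex_le_first[of a "rotate J a"] len n3 by simp
  then show ?thesis using Jn len by (simp add: nth_rotate)
qed

lemma J1: "1 \<le> J"
proof (rule ccontr)
  assume "\<not> 1 \<le> J"
  then have J0: "J = 0" by simp
  have "rev a = rotate 1 a"
  proof (rule nth_equalityI)
    show "length (rev a) = length (rotate 1 a)" by simp
    fix t assume "t < length (rev a)"
    then have t: "t < n" using len by simp
    show "rev a ! t = rotate 1 a ! t"
    proof (cases "t = n - 1")
      case True then show ?thesis using t len n3 by (simp add: rev_nth nth_rotate1)
    next
      case False
      then have "rev a ! t = K" using t len J0 aK[of "n - Suc t"] by (simp add: rev_nth)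
      moreover have "rotate 1 a ! t = K" using t len False J0 aK[of "Suc t"] by (simp add: nth_rotate nth_rotate1)
      ultimately show ?thesis by simp
    qed
  qed
  then have "rev a \<in> rotations a" using rot_in[OF anem, of 1] by simp
  then show False using asy by simp
qed

lemma a0: "a!0 < K" using a0J aJ by simp

lemma lenb: "length b = n" using len by (simp add: b_def)
lemma bnth: "t < n \<Longrightarrow> b!t = (if t = J then a!J + 1 else a!t)"
  using len by (simp add: b_def nth_list_update)

lemma bnth2: "t < n \<Longrightarrow> t \<noteq> J \<Longrightarrow> b!t = a!t"
  using bnth by simp

lemma LNM: "LastNonMax k a = b"
proof -
  have "drop (Suc J) a = replicate (n - j0) (k - 1)"
    using len aK j0J by (intro nth_equalityI) (auto simp: K_def)
  then show ?thesis
    unfolding LastNonMax_def b_def using upd_conv_take_nth_drop[of J a] Jn len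
    by (simp add: j0_def[symmetric] J_def[symmetric] Let_def j0J)
qed

lemma bset: "set b \<subseteq> {0..<k}"
proof
  fix x assume "x \<in> set b"
  then obtain t where "t < n" "x = b!t" using lenb by (auto simp: in_set_conv_nth)
  then show "x \<in> {0..<k}" using bnth bound aJ by (auto simp: K_def)
qed

lemma bneck: "r < n \<Longrightarrow> lex_le b (rotate r b)"
proof -
  assume r: "r < n"
  consider "r = 0" | "1 \<le> r" "r \<le> J" | "J < r" by linarith
  then show ?thesis
  proof cases
    case 1 then show ?thesis by (simp add: lex_le_def)
  next
    case 2
    have eq: "rotate r b = (rotate r a)[J - r := rotate r a ! (J - r) + 1]"
    proof (rule nth_equalityI)
      show "length (rotate r b) = length ((rotate r a)[J - r := rotate r a ! (J - r) + 1])"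
        using lenb len by simp
      fix t assume "t < length (rotate r b)"
      then have t: "t < n" using lenb by simp
      have m1: "(r + t) mod n = J \<longleftrightarrow> t = J - r"
      proof -
        have "r + t < 2 * n" using r t by simp
        then show ?thesis using 2 Jn t
          by (cases "r + t < n") (auto simp: le_mod_geq)
      qed
      have m2: "(r + (J - r)) mod n = J" using 2 Jn by simp
      show "rotate r b ! t = (rotate r a)[J - r := rotate r a ! (J - r) + 1] ! t"
        using t len lenb m1 m2 Jn 2 by (auto simp: nth_rotate bnth nth_list_update)
    qed
    have "lex_less b ((rotate r a)[J - r := rotate r a ! (J - r) + 1])"
      unfolding b_def
      using perturb[of a "rotate r a" "J - r" J] neck[OF r] len Jn 2 by simp
    then have "lex_less b (rotate r b)" using eq by simp
    then show ?thesis by (simp add: lex_le_def)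
  next
    case 3
    have "rotate r b ! 0 = K" using 3 r lenb bnth aK by (simp add: nth_rotate)
    moreover have "b!0 = a!0" using bnth J1 n3 by simp
    ultimately have "lex_less b (rotate r b)" using a0 lex_first[of b "rotate r b"] lenb n3 by simp
    then show ?thesis by (simp add: lex_le_def)
  qed
qed

lemma is_neck_b: "is_necklace b"
  unfolding is_necklace_def rotations_def using bneck lenb by auto

lemma bK: "i \<le> s \<Longrightarrow> s < n \<Longrightarrow> (\<forall>u. i \<le> u \<longrightarrow> u < J \<longrightarrow> a!u = K) \<Longrightarrow> a!J + 1 = K \<Longrightarrow> b!s = K"
  using bnth aK by (cases "s < J"; cases "s = J") auto

lemma key:
  assumes i: "1 \<le> i" "i \<le> n"
  shows "lex_less b (Rw i b) \<or>
    (Rw i b = b \<and> i \<le> J \<and> J < i + (n - 1 - J) \<and> a!J + 1 = K \<and> (\<forall>t<J. a!t = Rw i a ! t))"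
proof (cases "J < i")
  case True
  have "Rw i b ! 0 = b!(i-1)" using i lenb by (simp add: Rw_nth)
  moreover have "b!(i-1) > a!0" using bnth[of "i-1"] aK[of "i-1"] True i a0 a0J aJ
    by (cases "i - 1 = J") auto
  moreover have "b!0 = a!0" using bnth J1 n3 by simp
  ultimately have "lex_less b (Rw i b)" using lex_first[of b "Rw i b"] lenb n3 by simp
  then show ?thesis by simp
next
  case False
  define p where "p = i + (n - 1 - J)"
  have pn: "p < n" using False Jn i by (simp add: p_def)
  have "\<not> p < i" "n - 1 - (p - i) = J" using False Jn i by (auto simp: p_def)
  then have RaJ: "Rw i a ! p = a!J" using False Jn i len pn by (simp add: Rw_nth)
  have eq: "Rw i b = (Rw i a)[p := Rw i a ! p + 1]"
  proof (rule nth_equalityI)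
    show "length (Rw i b) = length ((Rw i a)[p := Rw i a ! p + 1])" using lenb len by simp
    fix t assume "t < length (Rw i b)"
    then have t: "t < n" using lenb by simp
    show "Rw i b ! t = (Rw i a)[p := Rw i a ! p + 1] ! t"
    proof (cases "t < i")
      case True
      then show ?thesis using t i False len lenb pn RaJ
        by (auto simp: Rw_nth bnth nth_list_update p_def)
    next
      case f2: False
      have "n - 1 - (t - i) = J \<longleftrightarrow> t = p" using f2 t i False Jn by (auto simp: p_def)
      then show ?thesis using t i False len lenb pn RaJ f2
        by (auto simp: Rw_nth bnth nth_list_update)
    qed
  qed
  have Al: "lex_less a (Rw i a)" using Aless[OF i] .
  show ?thesis
  proof (cases "p \<le> J")
    case True
    have "lex_less (a[J := a!J + 1]) ((Rw i a)[p := Rw i a ! p + 1])"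
      using perturb[of a "Rw i a" p J] True Jn len Al by (simp add: lex_le_def)
    then show ?thesis using eq by (simp add: b_def)
  next
    case pJ: False
    obtain d where d: "d < n" "\<forall>t<d. a!t = Rw i a!t" "a!d < Rw i a!d"
      using Al lex_less_iff[of a "Rw i a"] len by auto
    show ?thesis
    proof (cases "d < J")
      case True
      have "\<forall>t<d. b!t = Rw i b!t" using d True pJ eq bnth Jn
        by (auto simp: nth_list_update)
      moreover have "b!d < Rw i b!d" using d True pJ eq bnth Jn
        by (auto simp: nth_list_update)
      ultimately have "lex_less b (Rw i b)" using lex_less_iff[of b "Rw i b"] lenb d(1) by auto
      then show ?thesis by simp
    next
      case dJ: False
      have pre: "\<forall>t<J. a!t = Rw i a!t" using d dJ by auto
      have RJ: "Rw i a ! J = K"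
      proof -
        have "Rw i a ! J = a!(n - 1 - (J - i))" using False Jn i len by (simp add: Rw_nth)
        moreover have "J < n - 1 - (J - i)" "n - 1 - (J - i) < n" using pJ False Jn i by (auto simp: p_def)
        ultimately show ?thesis using aK by simp
      qed
      have RbJ: "Rw i b ! J = K" using eq RJ pJ Jn len by (simp add: nth_list_update)
      show ?thesis
      proof (cases "a!J + 1 < K")
        case True
        have "\<forall>t<J. b!t = Rw i b!t" using pre pJ eq bnth Jn
          by (auto simp: nth_list_update)
        moreover have "b!J < Rw i b!J" using True RbJ bnth Jn by simp
        ultimately have "lex_less b (Rw i b)" using lex_less_iff[of b "Rw i b"] lenb Jn by auto
        then show ?thesis by simp
      next
        case False2: False
        then have aJ1: "a!J + 1 = K" using aJ by simp
        have mid: "\<forall>u. i \<le> u \<longrightarrow> u < J \<longrightarrow> a!u = K"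
        proof (intro allI impI)
          fix u assume u: "i \<le> u" "u < J"
          have "a!u = a!(n - 1 - (u - i))" using pre u Jn i len by (simp add: Rw_nth)
          moreover have "J < n - 1 - (u - i)" "n - 1 - (u - i) < n" using pJ u Jn i by (auto simp: p_def)
          ultimately show "a!u = K" using aK by simp
        qed
        have "Rw i b = b"
        proof (rule nth_equalityI)
          show "length (Rw i b) = length b" by simp
          fix t assume "t < length (Rw i b)"
          then have t: "t < n" using lenb by simp
          show "Rw i b ! t = b ! t"
          proof (cases "t < i")
            case True
            have "Rw i b ! t = b!(i - 1 - t)" using True i lenb t by (simp add: Rw_nth)
            also have "\<dots> = a!(i-1-t)" by (rule bnth2) (use True False t Jn in linarith)+
            also have "\<dots> = Rw i a ! t" using True i len t by (simp add: Rw_nth)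
            also have "\<dots> = a!t" using pre True False by auto
            also have "\<dots> = b!t" by (rule bnth2[symmetric]) (use True False t Jn in linarith)+
            finally show ?thesis .
          next
            case f3: False
            have "Rw i b ! t = b!(n - 1 - (t - i))" using f3 i lenb t by (simp add: Rw_nth)
            also have "\<dots> = K" using bK[OF _ _ mid aJ1] f3 t i by simp
            also have "\<dots> = b!t" using bK[OF _ _ mid aJ1] f3 t by simp
            finally show ?thesis .
          qed
        qed
        then show ?thesis using False pJ aJ1 pre Jn by (simp add: p_def)
      qed
    qed
  qed
qed

lemma is_brac_b: "is_bracelet b"
  unfolding is_bracelet_def
proof
  fix v assume "v \<in> rotations b \<union> rotations (rev b)"
  then show "lex_le b v"
  proof
    assume "v \<in> rotations b" then show ?thesis using is_neck_b is_necklace_def by auto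
  next
    assume "v \<in> rotations (rev b)"
    then obtain r where r: "r < n" "v = rotate r (rev b)" using lenb by (auto simp: rotations_def)
    have "v = Rw (n - r) b" using r lenb by (simp add: Rw_rot)
    then show ?thesis using key[of "n - r"] r by (auto simp: lex_le_def)
  qed
qed

end

theorem mainTheorem5:
  fixes k n :: nat and \<alpha> :: "nat list"
  assumes "n \<ge> 3" and "k \<ge> 3" and "\<alpha> \<in> asym_bracelets k n"
  defines "j \<equiv> last_nonmax_idx k \<alpha>" and "l \<equiv> second_last_nonmax_idx k \<alpha>"
  shows "((\<alpha> ! (n - 1) < k - 1 \<or> \<alpha> ! (j - 1) < k - 2 \<or> \<not> is_palindrome (take l \<alpha>))
           \<longrightarrow> LastNonMax k \<alpha> \<in> asym_bracelets k n)
       \<and> ((\<alpha> ! (n - 1) = k - 1 \<and> \<alpha> ! (j - 1) = k - 2 \<and> is_palindrome (take l \<alpha>))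
           \<longrightarrow> symmetric_bracelet (LastNonMax k \<alpha>))"
proof -
  interpret L: LN k n \<alpha> using assms by unfold_locales
  have jJ: "j = Suc L.J" using L.j0J by (simp add: j_def L.j0_def)
  have K: "L.K = k - 1" by (simp add: L.K_def)
  let ?S = "{u. 1 \<le> u \<and> u < last_nonmax_idx k \<alpha> \<and> \<alpha> ! (u - 1) \<noteq> k - 1}"
  have finS: "finite ?S" by (rule finite_subset[of _ "{..<last_nonmax_idx k \<alpha>}"]) auto
  have lS: "l = Max ?S" by (simp add: l_def second_last_nonmax_idx_def)
  have part1: "LastNonMax k \<alpha> \<in> asym_bracelets k n"
    if c1: "\<alpha> ! (n - 1) < k - 1 \<or> \<alpha> ! (j - 1) < k - 2 \<or> \<not> is_palindrome (take l \<alpha>)"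
  proof -
    have "rev L.b \<notin> rotations L.b"
    proof
      assume "rev L.b \<in> rotations L.b"
      then obtain r where r: "r < n" "rev L.b = rotate r L.b" using L.lenb by (auto simp: rotations_def)
      define i where "i = (if r = 0 then n else r)"
      have i: "1 \<le> i" "i \<le> n" using r assms(1) by (auto simp: i_def)
      have "Rw i L.b = rotate (n - i) (rotate r L.b)" using i L.lenb r by (simp add: Rw_rot)
      also have "\<dots> = L.b" using r L.lenb by (auto simp: i_def rotate_rotate)
      finally have Req: "Rw i L.b = L.b" .
      then have bad: "i \<le> L.J" "L.J < i + (n - 1 - L.J)" "\<alpha>!L.J + 1 = L.K"
          "\<forall>t<L.J. \<alpha>!t = Rw i \<alpha> ! t"
        using L.key[OF i] lex_less_irrefl by auto
      have c1a: "\<alpha> ! (n - 1) = k - 1" using L.aK[of "n - 1"] bad assms(1) K by simp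
      have c1b: "\<alpha> ! (j - 1) = k - 2" using bad(3) jJ K by simp
      have mid: "\<And>u. i \<le> u \<Longrightarrow> u < L.J \<Longrightarrow> \<alpha>!u = L.K"
      proof -
        fix u assume u: "i \<le> u" "u < L.J"
        have "\<alpha>!u = Rw i \<alpha> ! u" using bad(4) u by blast
        also have "\<dots> = \<alpha>!(n - 1 - (u - i))" using u L.Jn i L.len by (simp add: Rw_nth)
        finally have "\<alpha>!u = \<alpha>!(n - 1 - (u - i))" .
        moreover have "L.J < n - 1 - (u - i)" "n - 1 - (u - i) < n" using bad u L.Jn i by auto
        ultimately show "\<alpha>!u = L.K" using L.aK by simp
      qed
      have pal: "\<alpha>!t = \<alpha>!(i - 1 - t)" if t: "t < i" for t
      proof -
        have "\<alpha>!t = Rw i \<alpha> ! t" using bad(1,4) t by simp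
        also have "\<dots> = \<alpha>!(i - 1 - t)" using t i L.len by (simp add: Rw_nth)
        finally show ?thesis .
      qed
      have iS: "i \<in> ?S" using pal[of "i-1"] i bad(1) L.a0 jJ K
        by (auto simp: j_def)
      have le: "\<forall>u\<in>?S. u \<le> i"
      proof
        fix u assume "u \<in> ?S"
        then show "u \<le> i" using mid[of "u-1"] jJ K by (force simp: j_def)
      qed
      have li: "l = i" unfolding lS using iS le finS by (intro Max_eqI) auto
      have "is_palindrome (take l \<alpha>)"
        unfolding is_palindrome_def li
      proof (rule nth_equalityI)
        show "length (take i \<alpha>) = length (rev (take i \<alpha>))" by simp
        fix t assume "t < length (take i \<alpha>)"
        then have t: "t < i" using i L.len by simp
        have e: "\<alpha>!t = \<alpha>!(i - 1 - t)" using pal[OF t] .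
        show "take i \<alpha> ! t = rev (take i \<alpha>) ! t" using t i L.len e by (simp add: rev_nth)
      qed
      then show False using c1 c1a c1b by simp
    qed
    then show ?thesis unfolding L.LNM asym_bracelets_def asymmetric_necklace_def
      using L.lenb L.bset L.is_brac_b L.is_neck_b by simp
  qed
  have part2: "symmetric_bracelet (LastNonMax k \<alpha>)"
    if c2: "\<alpha> ! (j - 1) = k - 2" "is_palindrome (take l \<alpha>)"
  proof -
    have oneS: "1 \<in> ?S" using L.J1 L.a0 K L.j0J by (auto simp: L.j0_def)
    have lS': "l \<in> ?S" unfolding lS using finS oneS Max_in by blast
    have lmax: "\<And>u. u \<in> ?S \<Longrightarrow> u \<le> l" unfolding lS using finS Max_ge by blast
    have l1: "1 \<le> l" "l \<le> L.J" using lS' L.j0J by (auto simp: L.j0_def)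
    have mid: "\<And>s. l \<le> s \<Longrightarrow> s < L.J \<Longrightarrow> \<alpha>!s = L.K"
    proof (rule ccontr)
      fix s assume s: "l \<le> s" "s < L.J" "\<alpha>!s \<noteq> L.K"
      then have "Suc s \<in> ?S" using L.j0J K by (auto simp: L.j0_def)
      then show False using lmax s by force
    qed
    have aJ1: "\<alpha>!L.J + 1 = L.K" using c2(1) jJ K assms(2) by simp
    have pal: "\<And>t. t < l \<Longrightarrow> \<alpha>!t = \<alpha>!(l - 1 - t)"
    proof -
      fix t assume t: "t < l"
      have "take l \<alpha> ! t = rev (take l \<alpha>) ! t" using c2(2) unfolding is_palindrome_def by metis
      then show "\<alpha>!t = \<alpha>!(l - 1 - t)" using t l1 L.Jn L.len by (simp add: rev_nth)
    qed
    have Req: "Rw l L.b = L.b"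
    proof (rule nth_equalityI)
      show "length (Rw l L.b) = length L.b" by simp
      fix t assume "t < length (Rw l L.b)"
      then have t: "t < n" using L.lenb by simp
      show "Rw l L.b ! t = L.b ! t"
      proof (cases "t < l")
        case True
        have "Rw l L.b ! t = L.b!(l - 1 - t)" using True l1 L.Jn L.lenb t by (simp add: Rw_nth)
        also have "\<dots> = \<alpha>!(l-1-t)" by (rule L.bnth2) (use True l1 t L.Jn in linarith)+
        also have "\<dots> = \<alpha>!t" using pal[OF True] by simp
        also have "\<dots> = L.b!t" by (rule L.bnth2[symmetric]) (use True l1 t L.Jn in linarith)+
        finally show ?thesis .
      next
        case f3: False
        have "Rw l L.b ! t = L.b!(n - 1 - (t - l))" using f3 l1 L.Jn L.lenb t by (simp add: Rw_nth)
        also have "\<dots> = L.K" using L.bK[of l "n - 1 - (t - l)"] mid aJ1 f3 t l1 by simp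
        also have "\<dots> = L.b!t" using L.bK[of l t] mid aJ1 f3 t by simp
        finally show ?thesis .
      qed
    qed
    have "rotate l L.b = rotate l (rotate (n - l) (rev L.b))"
      using Req l1 L.Jn L.lenb by (simp add: Rw_rot)
    also have "\<dots> = rev L.b" using l1 L.Jn L.lenb by (simp add: rotate_rotate)
    finally have "rev L.b \<in> rotations L.b"
      using l1 L.Jn L.lenb unfolding rotations_def by (intro CollectI exI[of _ l]) auto
    then show ?thesis unfolding L.LNM symmetric_bracelet_def symmetric_necklace_def
      using L.is_brac_b L.is_neck_b by simp
  qed
  show ?thesis using part1 part2 by blast
qed

end
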